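(* For every integer $k\ge 2$, the class $\mathcal{G}_k$ is closed under taking minors (edge deletions and edge contractions).
   Context: For $n\ge 1$ let $E_n$ be the edge set of $K_n$ and $\mathrm{CUT}_n\subseteq\mathbb{R}^{E_n}$ the cut polytope, i.e. $\mathrm{conv}\{(x_ix_j)_{ij\in E_n}: x\in\{\pm1\}^n\}$. The support graph of a linear inequality $w^Tx\le\alpha$ on $\mathbb{R}^{E_n}$ is $H=(W,F)$ with $F=\{ij: w_{ij}\ne0\}$ and $W$ the set of nodes covered by $F$; the inequality is supported by at most $k$ points if $|W|\le k$. Let $\mathcal{R}_k(K_n)\subseteq\mathbb{R}^{E_n}$ be the polyhedron defined by all inequalities valid for $\mathrm{CUT}_n$ that are supported by at most $k$ points. For a graph $G=([n],E)$, let $\mathrm{CUT}(G)=\pi_E(\mathrm{CUT}_n)$ and $\mathcal{R}_k(G)=\pi_E(\mathcal{R}_k(K_n))$, where $\pi_E$ is the coordinate projection onto $\mathbb{R}^E$. $\mathcal{G}_k$ is the class of all graphs $G$ with $\mathrm{CUT}(G)=\mathcal{R}_k(G)$. *)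

theory Defs
  imports Complex_Main
begin

text \<open>Vertices of K_n are 0,...,n-1; edges are 2-element subsets.
  A point of R^{E} is represented by a function from edges to reals which is
  zero outside E.\<close>

definition edges :: "nat \<Rightarrow> nat set set" where
  "edges n = {{i, j} | i j. i < n \<and> j < n \<and> i \<noteq> j}"

text \<open>Sign vectors x in {+1,-1}^n (normalised to 1 outside [n], so the set is finite).\<close>
definition signs :: "nat \<Rightarrow> (nat \<Rightarrow> real) set" where
  "signs n = {x. \<forall>i. (i < n \<longrightarrow> x i \<in> {-1, 1}) \<and> (n \<le> i \<longrightarrow> x i = 1)}"

definition cut_vec :: "nat \<Rightarrow> (nat \<Rightarrow> real) \<Rightarrow> nat set \<Rightarrow> real" where
  "cut_vec n x = (\<lambda>e. if e \<in> edges n then (\<Prod>i\<in>e. x i) else 0)"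

definition CUT :: "nat \<Rightarrow> (nat set \<Rightarrow> real) set" where
  "CUT n = {y. \<exists>\<mu> :: (nat \<Rightarrow> real) \<Rightarrow> real.
              (\<forall>x\<in>signs n. 0 \<le> \<mu> x) \<and> (\<Sum>x\<in>signs n. \<mu> x) = 1 \<and>
              y = (\<lambda>e. \<Sum>x\<in>signs n. \<mu> x * cut_vec n x e)}"

definition lin :: "nat \<Rightarrow> (nat set \<Rightarrow> real) \<Rightarrow> (nat set \<Rightarrow> real) \<Rightarrow> real" where
  "lin n w y = (\<Sum>e\<in>edges n. w e * y e)"

definition support_nodes :: "nat \<Rightarrow> (nat set \<Rightarrow> real) \<Rightarrow> nat set" where
  "support_nodes n w = \<Union> {e \<in> edges n. w e \<noteq> 0}"

definition valid_CUT :: "nat \<Rightarrow> (nat set \<Rightarrow> real) \<Rightarrow> real \<Rightarrow> bool" where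
  "valid_CUT n w \<alpha> \<longleftrightarrow> (\<forall>y\<in>CUT n. lin n w y \<le> \<alpha>)"

definition Rk :: "nat \<Rightarrow> nat \<Rightarrow> (nat set \<Rightarrow> real) set" where
  "Rk k n = {y. (\<forall>e. e \<notin> edges n \<longrightarrow> y e = 0) \<and>
     (\<forall>w \<alpha>. valid_CUT n w \<alpha> \<and> card (support_nodes n w) \<le> k \<longrightarrow> lin n w y \<le> \<alpha>)}"

definition proj :: "nat set set \<Rightarrow> (nat set \<Rightarrow> real) \<Rightarrow> nat set \<Rightarrow> real" where
  "proj E y = (\<lambda>e. if e \<in> E then y e else 0)"

definition in_Gk :: "nat \<Rightarrow> nat \<Rightarrow> nat set set \<Rightarrow> bool" where
  "in_Gk k n E \<longleftrightarrow> E \<subseteq> edges n \<and> proj E ` CUT n = proj E ` Rk k n"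

definition connected_in :: "nat set set \<Rightarrow> nat set \<Rightarrow> bool" where
  "connected_in E S \<longleftrightarrow>
     (\<forall>a\<in>S. \<forall>b\<in>S. (\<lambda>u v. u \<in> S \<and> v \<in> S \<and> {u, v} \<in> E)\<^sup>*\<^sup>* a b)"

definition is_minor :: "nat \<Rightarrow> nat set set \<Rightarrow> nat \<Rightarrow> nat set set \<Rightarrow> bool" where
  "is_minor m F n E \<longleftrightarrow> (\<exists>V :: nat \<Rightarrow> nat set.
      (\<forall>i<m. V i \<noteq> {} \<and> V i \<subseteq> {0..<n} \<and> connected_in E (V i)) \<and>
      (\<forall>i<m. \<forall>j<m. i \<noteq> j \<longrightarrow> V i \<inter> V j = {}) \<and>
      (\<forall>i<m. \<forall>j<m. {i, j} \<in> F \<longrightarrow> (\<exists>a\<in>V i. \<exists>b\<in>V j. {a, b} \<in> E)))"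

end

theory Submission
  imports Defs "HOL-Library.FuncSet"
begin

lemma signs_pm: "x \<in> signs n \<Longrightarrow> x i \<in> {-1, 1}"
  unfolding signs_def by (cases "i < n") auto

lemma signs_sq: "x \<in> signs n \<Longrightarrow> x i * x i = 1"
  using signs_pm[of x n i] by auto

lemma finite_signs: "finite (signs n)"
proof -
  have "signs n \<subseteq> (\<lambda>g i. if i < n then g i else 1) ` (PiE {..<n} (\<lambda>_. {-1, 1::real}))"
  proof
    fix x assume x: "x \<in> signs n"
    define g where "g = restrict x {..<n}"
    have "g \<in> PiE {..<n} (\<lambda>_. {-1, 1::real})" using x unfolding g_def signs_def by auto
    moreover have "x = (\<lambda>i. if i < n then g i else 1)" using x unfolding g_def signs_def
      by (auto simp: fun_eq_iff)
    ultimately show "x \<in> (\<lambda>g i. if i < n then g i else 1) ` (PiE {..<n} (\<lambda>_. {-1, 1::real}))" by blast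
  qed
  moreover have "finite (PiE {..<n} (\<lambda>_. {-1, 1::real}))" by (intro finite_PiE) auto
  ultimately show ?thesis using finite_subset by blast
qed

lemma edges_sub: "edges n \<subseteq> Pow {0..<n}"
  unfolding edges_def by auto

lemma finite_edges: "finite (edges n)"
  using edges_sub finite_subset by (metis finite_Pow_iff finite_atLeastLessThan)

lemma edgesE: assumes "e \<in> edges n"
  obtains a b where "e = {a, b}" "a \<noteq> b" "a < n" "b < n"
  using assms unfolding edges_def by auto

lemma edgesI: "a < n \<Longrightarrow> b < n \<Longrightarrow> a \<noteq> b \<Longrightarrow> {a, b} \<in> edges n"
  unfolding edges_def by auto

lemma cut_in_CUT: assumes "x \<in> signs n" shows "cut_vec n x \<in> CUT n"
proof -
  let ?mu = "\<lambda>x'. if x' = x then 1 else (0::real)"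
  have "(\<Sum>x'\<in>signs n. ?mu x') = 1" using assms finite_signs by (simp add: sum.delta)
  moreover have "cut_vec n x = (\<lambda>e. \<Sum>x'\<in>signs n. ?mu x' * cut_vec n x' e)"
  proof
    fix e
    have "(\<Sum>x'\<in>signs n. ?mu x' * cut_vec n x' e) = (\<Sum>x'\<in>signs n. if x' = x then cut_vec n x' e else 0)"
      by (intro sum.cong) auto
    also have "\<dots> = cut_vec n x e" using assms finite_signs by (simp add: sum.delta)
    finally show "cut_vec n x e = (\<Sum>x'\<in>signs n. ?mu x' * cut_vec n x' e)" by simp
  qed
  ultimately show ?thesis unfolding CUT_def by (intro CollectI exI[of _ ?mu]) auto
qed

lemma lin_comb:
  "lin n w (\<lambda>e. \<Sum>x\<in>S. \<mu> x * c x e) = (\<Sum>x\<in>S. \<mu> x * lin n w (c x))"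
  unfolding lin_def by (simp add: sum_distrib_left sum_distrib_right mult_ac sum.swap[of _ S])

lemma valid_iff: "valid_CUT n w \<alpha> \<longleftrightarrow> (\<forall>x\<in>signs n. lin n w (cut_vec n x) \<le> \<alpha>)"
proof
  assume "valid_CUT n w \<alpha>" then show "\<forall>x\<in>signs n. lin n w (cut_vec n x) \<le> \<alpha>"
    using cut_in_CUT unfolding valid_CUT_def by blast
next
  assume h: "\<forall>x\<in>signs n. lin n w (cut_vec n x) \<le> \<alpha>"
  show "valid_CUT n w \<alpha>" unfolding valid_CUT_def
  proof
    fix y assume "y \<in> CUT n"
    then obtain \<mu> where mu: "\<forall>x\<in>signs n. 0 \<le> \<mu> x" "(\<Sum>x\<in>signs n. \<mu> x) = 1"
      "y = (\<lambda>e. \<Sum>x\<in>signs n. \<mu> x * cut_vec n x e)" unfolding CUT_def by blast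
    have "lin n w y = (\<Sum>x\<in>signs n. \<mu> x * lin n w (cut_vec n x))" using mu(3) lin_comb by simp
    also have "\<dots> \<le> (\<Sum>x\<in>signs n. \<mu> x * \<alpha>)"
      by (intro sum_mono mult_left_mono) (use h mu in auto)
    also have "\<dots> = \<alpha>" using mu(2) by (simp add: sum_distrib_right[symmetric])
    finally show "lin n w y \<le> \<alpha>" .
  qed
qed

lemma CUT_sub_Rk: "CUT n \<subseteq> Rk k n"
proof
  fix y assume y: "y \<in> CUT n"
  then obtain \<mu> where mu: "y = (\<lambda>e. \<Sum>x\<in>signs n. \<mu> x * cut_vec n x e)" unfolding CUT_def by blast
  have "\<forall>e. e \<notin> edges n \<longrightarrow> y e = 0" using mu unfolding cut_vec_def by simp
  then show "y \<in> Rk k n" using y unfolding Rk_def valid_CUT_def by blast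
qed


lemma phi_edges:
  assumes H: "\<forall>a b. \<phi> a \<noteq> \<phi> b \<longrightarrow> \<phi> a < m \<and> \<phi> b < m"
    and e: "e \<in> edges n" and c: "card (\<phi> ` e) \<noteq> 1"
  shows "\<phi> ` e \<in> edges m"
proof -
  obtain a b where ab: "e = {a, b}" "a \<noteq> b" "a < n" "b < n" using e by (rule edgesE)
  have "\<phi> a \<noteq> \<phi> b" using c ab by auto
  then show ?thesis using H ab by (auto intro: edgesI)
qed

lemma decomp:
  assumes H: "\<forall>a b. \<phi> a \<noteq> \<phi> b \<longrightarrow> \<phi> a < m \<and> \<phi> b < m"
  shows "(\<Sum>e\<in>edges n. w e * (if card (\<phi>`e) = 1 then 1 else g (\<phi>`e))) =
    (\<Sum>e\<in>{e\<in>edges n. card (\<phi>`e) = 1}. w e) +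
    lin m (\<lambda>f. \<Sum>e\<in>{e\<in>edges n. card (\<phi>`e) \<noteq> 1 \<and> \<phi>`e = f}. w e) g"
proof -
  let ?B = "{e\<in>edges n. card (\<phi>`e) \<noteq> 1}"
  have "(\<Sum>e\<in>edges n. w e * (if card (\<phi>`e) = 1 then 1 else g (\<phi>`e))) =
     (\<Sum>e\<in>edges n. if card (\<phi>`e) = 1 then w e else w e * g (\<phi>`e))"
    by (intro sum.cong) auto
  also have "\<dots> = (\<Sum>e\<in>{e\<in>edges n. card (\<phi>`e) = 1}. w e) + (\<Sum>e\<in>?B. w e * g (\<phi>`e))"
    by (subst sum.If_cases[OF finite_edges]) (auto intro!: arg_cong2[where f="(+)"] sum.cong)
  also have "(\<Sum>e\<in>?B. w e * g (\<phi>`e)) =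
     (\<Sum>f\<in>edges m. \<Sum>e\<in>{e. e \<in> ?B \<and> \<phi>`e = f}. w e * g (\<phi>`e))"
    by (rule sum.group[symmetric]) (use finite_edges phi_edges[OF H] in auto)
  also have "\<dots> = lin m (\<lambda>f. \<Sum>e\<in>{e\<in>edges n. card (\<phi>`e) \<noteq> 1 \<and> \<phi>`e = f}. w e) g"
    unfolding lin_def sum_distrib_right by (intro sum.cong) auto
  finally show ?thesis .
qed

lemma support_sub:
  "support_nodes m (\<lambda>f. \<Sum>e\<in>{e\<in>edges n. card (\<phi>`e) \<noteq> 1 \<and> \<phi>`e = f}. w e) \<subseteq> \<phi> ` support_nodes n w"
proof
  fix i assume "i \<in> support_nodes m (\<lambda>f. \<Sum>e\<in>{e\<in>edges n. card (\<phi>`e) \<noteq> 1 \<and> \<phi>`e = f}. w e)"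
  then obtain f where f: "f \<in> edges m" "i \<in> f"
    "(\<Sum>e\<in>{e\<in>edges n. card (\<phi>`e) \<noteq> 1 \<and> \<phi>`e = f}. w e) \<noteq> 0"
    unfolding support_nodes_def by auto
  then obtain e where e: "e \<in> edges n" "\<phi>`e = f" "w e \<noteq> 0"
    using sum.neutral[of _ w] by (smt (verit) mem_Collect_eq)
  then show "i \<in> \<phi> ` support_nodes n w" using f unfolding support_nodes_def by auto
qed

lemma finite_support: "finite (support_nodes n w)"
proof -
  have "support_nodes n w \<subseteq> {0..<n}" using edges_sub unfolding support_nodes_def by auto
  then show ?thesis using finite_subset by blast
qed

lemma lift_Rk:
  assumes y: "y \<in> Rk k m"
    and H: "\<forall>a b. \<phi> a \<noteq> \<phi> b \<longrightarrow> \<phi> a < m \<and> \<phi> b < m"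
  shows "(\<lambda>e. if e \<in> edges n then (if card (\<phi>`e) = 1 then 1 else y (\<phi>`e)) else 0) \<in> Rk k n"
    (is "?z \<in> _")
proof -
  have "lin n w ?z \<le> \<alpha>" if v: "valid_CUT n w \<alpha>" and c: "card (support_nodes n w) \<le> k" for w \<alpha>
  proof -
    define w' where "w' = (\<lambda>f. \<Sum>e\<in>{e\<in>edges n. card (\<phi>`e) \<noteq> 1 \<and> \<phi>`e = f}. w e)"
    define c0 where "c0 = (\<Sum>e\<in>{e\<in>edges n. card (\<phi>`e) = 1}. w e)"
    have "valid_CUT m w' (\<alpha> - c0)" unfolding valid_iff
    proof
      fix x' assume x': "x' \<in> signs m"
      define x where "x = (\<lambda>a. if a < n then x' (\<phi> a) else 1)"
      have xs: "x \<in> signs n" using signs_pm[OF x'] unfolding x_def signs_def by auto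
      have "lin n w (cut_vec n x) =
        (\<Sum>e\<in>edges n. w e * (if card (\<phi>`e) = 1 then 1 else cut_vec m x' (\<phi>`e)))"
        unfolding lin_def
      proof (intro sum.cong refl)
        fix e assume e: "e \<in> edges n"
        obtain a b where ab: "e = {a, b}" "a \<noteq> b" "a < n" "b < n" using e by (rule edgesE)
        show "w e * cut_vec n x e = w e * (if card (\<phi>`e) = 1 then 1 else cut_vec m x' (\<phi>`e))"
        proof (cases "\<phi> a = \<phi> b")
          case True
          then show ?thesis using e ab signs_sq[OF x'] unfolding cut_vec_def x_def by simp
        next
          case False
          then have "\<phi>`e \<in> edges m" using H ab by (auto intro: edgesI)
          then show ?thesis using False e ab unfolding cut_vec_def x_def by simp
        qed
      qed
      also have "\<dots> = c0 + lin m w' (cut_vec m x')"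
        unfolding c0_def w'_def by (rule decomp[OF H])
      finally show "lin m w' (cut_vec m x') \<le> \<alpha> - c0"
        using v xs unfolding valid_iff by force
    qed
    moreover have "card (support_nodes m w') \<le> k"
    proof -
      have "card (support_nodes m w') \<le> card (\<phi> ` support_nodes n w)"
        unfolding w'_def by (intro card_mono finite_imageI finite_support support_sub)
      also have "\<dots> \<le> card (support_nodes n w)" by (rule card_image_le[OF finite_support])
      finally show ?thesis using c by simp
    qed
    ultimately have "lin m w' y \<le> \<alpha> - c0" using y unfolding Rk_def by blast
    moreover have "lin n w ?z = c0 + lin m w' y"
    proof -
      have "lin n w ?z = (\<Sum>e\<in>edges n. w e * (if card (\<phi>`e) = 1 then 1 else y (\<phi>`e)))"
        unfolding lin_def by (intro sum.cong) auto
      also have "\<dots> = c0 + lin m w' y" unfolding c0_def w'_def by (rule decomp[OF H])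
      finally show ?thesis .
    qed
    ultimately show ?thesis by simp
  qed
  then show ?thesis unfolding Rk_def by auto
qed


lemma sum_nonneg_zeroD:
  fixes f :: "'a \<Rightarrow> real"
  assumes "finite A" "\<forall>x\<in>A. 0 \<le> f x" "sum f A = 0" "x \<in> A" shows "f x = 0"
  using sum_nonneg_eq_0_iff assms by blast

theorem mainTheorem8:
  fixes k n m :: nat and E F :: "nat set set"
  assumes "2 \<le> k"
    and "in_Gk k n E"
    and "F \<subseteq> edges m"
    and "is_minor m F n E"
  shows "in_Gk k m F"
proof -
  have EG: "E \<subseteq> edges n" and eqG: "proj E ` CUT n = proj E ` Rk k n"
    using assms(2) unfolding in_Gk_def by auto
  obtain V where V1: "\<forall>i<m. V i \<noteq> {} \<and> V i \<subseteq> {0..<n} \<and> connected_in E (V i)"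
    and V2: "\<forall>i<m. \<forall>j<m. i \<noteq> j \<longrightarrow> V i \<inter> V j = {}"
    and V3: "\<forall>i<m. \<forall>j<m. {i, j} \<in> F \<longrightarrow> (\<exists>a\<in>V i. \<exists>b\<in>V j. {a, b} \<in> E)"
    using assms(4) unfolding is_minor_def by blast
  define \<phi> where "\<phi> a = (if \<exists>i<m. a \<in> V i then (SOME i. i < m \<and> a \<in> V i) else 0)" for a
  define \<psi> where "\<psi> i = (SOME a. a \<in> V i)" for i
  have phiV: "\<phi> a = i" if "i < m" "a \<in> V i" for a i
  proof -
    have ex: "\<exists>i<m. a \<in> V i" using that by blast
    have "(SOME i. i < m \<and> a \<in> V i) < m \<and> a \<in> V (SOME i. i < m \<and> a \<in> V i)"
      using someI_ex[OF ex[unfolded Bex_def[symmetric]]] ex by (metis (mono_tags, lifting) someI_ex)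
    then show ?thesis using V2 that ex unfolding \<phi>_def by auto
  qed
  have phim: "\<phi> a < m \<or> (m = 0 \<and> \<phi> a = 0)" for a
  proof (cases "\<exists>i<m. a \<in> V i")
    case True
    then obtain i where "i < m" "a \<in> V i" by blast
    then show ?thesis using phiV by simp
  next
    case False then show ?thesis unfolding \<phi>_def by auto
  qed
  have H: "\<forall>a b. \<phi> a \<noteq> \<phi> b \<longrightarrow> \<phi> a < m \<and> \<phi> b < m"
  proof (intro allI impI)
    fix a b assume "\<phi> a \<noteq> \<phi> b"
    then show "\<phi> a < m \<and> \<phi> b < m" using phim[of a] phim[of b] by auto
  qed
  have psiV: "\<psi> i \<in> V i" "\<psi> i < n" if "i < m" for i
  proof -
    show "\<psi> i \<in> V i" using V1 that unfolding \<psi>_def by (simp add: some_in_eq)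
    then show "\<psi> i < n" using V1 that by (meson atLeastLessThan_iff subsetD)
  qed
  have "proj F ` Rk k m \<subseteq> proj F ` CUT m"
  proof
    fix p assume "p \<in> proj F ` Rk k m"
    then obtain y where y: "y \<in> Rk k m" and p: "p = proj F y" by blast
    define z where "z = (\<lambda>e. if e \<in> edges n then (if card (\<phi>`e) = 1 then 1 else y (\<phi>`e)) else 0)"
    have zR: "z \<in> Rk k n" unfolding z_def by (rule lift_Rk[OF y H])
    then have "proj E z \<in> proj E ` CUT n" using eqG by blast
    then obtain y0 where y0: "y0 \<in> CUT n" "proj E y0 = proj E z" by auto
    then obtain \<mu> where mu: "\<forall>x\<in>signs n. 0 \<le> \<mu> x" "(\<Sum>x\<in>signs n. \<mu> x) = 1"
      "y0 = (\<lambda>e. \<Sum>x\<in>signs n. \<mu> x * cut_vec n x e)" unfolding CUT_def by blast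
    have zE: "z e = (\<Sum>x\<in>signs n. \<mu> x * cut_vec n x e)" if "e \<in> E" for e
      using y0(2) mu(3) that unfolding proj_def by (metis (mono_tags, lifting))
    have zab: "z {a, b} = (\<Sum>x\<in>signs n. \<mu> x * (x a * x b))" if "{a, b} \<in> E" for a b
    proof -
      have e: "{a, b} \<in> edges n" using that EG by auto
      then have "a \<noteq> b" by (auto elim: edgesE simp: doubleton_eq_iff)
      then show ?thesis using zE[OF that] e unfolding cut_vec_def by simp
    qed
    have edge_const: "x c = x d" if x: "x \<in> signs n" "\<mu> x \<noteq> 0" and i: "i < m"
      and cd: "c \<in> V i" "d \<in> V i" "{c, d} \<in> E" for x c d i
    proof -
      have e: "{c, d} \<in> edges n" using cd EG by auto
      have "\<phi> ` {c, d} = {i}" using phiV[OF i] cd by auto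
      then have "z {c, d} = 1" using e unfolding z_def by simp
      then have s1: "(\<Sum>x\<in>signs n. \<mu> x * (x c * x d)) = 1" using zab[OF cd(3)] by simp
      have le: "x c * x d \<le> 1" if "x \<in> signs n" for x
        using signs_pm[OF that, of c] signs_pm[OF that, of d] by auto
      have "(\<Sum>x\<in>signs n. \<mu> x * (1 - x c * x d)) = (\<Sum>x\<in>signs n. \<mu> x) - (\<Sum>x\<in>signs n. \<mu> x * (x c * x d))"
        by (simp add: right_diff_distrib sum_subtractf)
      also have "\<dots> = 0" using s1 mu(2) by simp
      finally have "\<mu> x * (1 - x c * x d) = 0"
        by (rule sum_nonneg_zeroD[OF finite_signs _ _ x(1), rotated])
           (use mu(1) le in auto)
      then have "x c * x d = 1" using x(2) by simp
      then show ?thesis using signs_pm[OF x(1), of c] signs_pm[OF x(1), of d] by auto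
    qed
    have const: "x a = x b" if x: "x \<in> signs n" "\<mu> x \<noteq> 0" and i: "i < m"
      and ab: "a \<in> V i" "b \<in> V i" for x a b i
    proof -
      have "(\<lambda>u v. u \<in> V i \<and> v \<in> V i \<and> {u, v} \<in> E)\<^sup>*\<^sup>* a b"
        using V1 i ab unfolding connected_in_def by blast
      then show ?thesis
      proof (induction rule: rtranclp_induct)
        case base then show ?case by simp
      next
        case (step u v) then show ?case using edge_const[OF x i] by metis
      qed
    qed
    define r where "r x = (\<lambda>i. if i < m then x (\<psi> i) else (1::real))" for x :: "nat \<Rightarrow> real"
    have rS: "r x \<in> signs m" if "x \<in> signs n" for x
      using signs_pm[OF that] unfolding r_def signs_def by auto
    define \<nu> where "\<nu> x' = (\<Sum>x\<in>{x. x \<in> signs n \<and> r x = x'}. \<mu> x)" for x'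
    have transfer: "(\<Sum>x'\<in>signs m. \<nu> x' * g x') = (\<Sum>x\<in>signs n. \<mu> x * g (r x))" for g
    proof -
      have "(\<Sum>x'\<in>signs m. \<nu> x' * g x') = (\<Sum>x'\<in>signs m. \<Sum>x\<in>{x. x \<in> signs n \<and> r x = x'}. \<mu> x * g (r x))"
        unfolding \<nu>_def sum_distrib_right by (intro sum.cong) auto
      also have "\<dots> = (\<Sum>x\<in>signs n. \<mu> x * g (r x))"
        by (rule sum.group) (use finite_signs rS in auto)
      finally show ?thesis .
    qed
    define y' where "y' = (\<lambda>e. \<Sum>x'\<in>signs m. \<nu> x' * cut_vec m x' e)"
    have "y' \<in> CUT m"
    proof -
      have "\<forall>x'\<in>signs m. 0 \<le> \<nu> x'" unfolding \<nu>_def using mu(1) by (auto intro: sum_nonneg)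
      moreover have "(\<Sum>x'\<in>signs m. \<nu> x') = 1" using transfer[of "\<lambda>_. 1"] mu(2) by simp
      ultimately show ?thesis unfolding CUT_def y'_def by blast
    qed
    moreover have "proj F y' = proj F y"
    proof
      fix f
      show "proj F y' f = proj F y f"
      proof (cases "f \<in> F")
        case False then show ?thesis unfolding proj_def by simp
      next
        case True
        then have fm: "f \<in> edges m" using assms(3) by auto
        then obtain i j where ij: "f = {i, j}" "i \<noteq> j" "i < m" "j < m" by (rule edgesE)
        obtain a b where ab: "a \<in> V i" "b \<in> V j" "{a, b} \<in> E" using V3 ij True by blast
        have "\<phi> ` {a, b} = {i, j}" using phiV ij ab by auto
        moreover have "{a, b} \<in> edges n" using ab EG by auto
        ultimately have "z {a, b} = y f" using ij unfolding z_def by simp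
        then have "y f = (\<Sum>x\<in>signs n. \<mu> x * (x a * x b))" using zab[OF ab(3)] by simp
        also have "\<dots> = (\<Sum>x\<in>signs n. \<mu> x * cut_vec m (r x) f)"
        proof (intro sum.cong refl)
          fix x assume x: "x \<in> signs n"
          show "\<mu> x * (x a * x b) = \<mu> x * cut_vec m (r x) f"
          proof (cases "\<mu> x = 0")
            case False
            have "x a = x (\<psi> i)" by (rule const[OF x False ij(3) ab(1) psiV(1)[OF ij(3)]])
            moreover have "x b = x (\<psi> j)" by (rule const[OF x False ij(4) ab(2) psiV(1)[OF ij(4)]])
            ultimately show ?thesis using fm ij unfolding cut_vec_def r_def by simp
          qed simp
        qed
        also have "\<dots> = y' f" unfolding y'_def using transfer[of "\<lambda>x'. cut_vec m x' f"] by simp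
        finally show ?thesis using True unfolding proj_def by simp
      qed
    qed
    ultimately show "p \<in> proj F ` CUT m" using p by (metis image_eqI)
  qed
  moreover have "proj F ` CUT m \<subseteq> proj F ` Rk k m" using CUT_sub_Rk by blast
  ultimately show ?thesis unfolding in_Gk_def using assms(3) by blast
qed

end
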